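(* Let $\Omega$ be a finite set and $f:2^{\Omega}\to\mathbb{R}$ increasing with $f(\emptyset)=0$, and let $\tilde\gamma\in\Gamma(f)$. Then for every $\mathcal{S}\subseteq\Omega$, $f(\mathcal{S})\ge-|\mathcal{S}|D[f]+\sum_{s\in\mathcal{S}}\tilde\gamma_s$.
   Context: For a permutation $\pi$ of $\Omega$, $\mathcal{S}^\pi_0=\emptyset$, $\mathcal{S}^\pi_k=\{\pi_1,\dots,\pi_k\}$; $\Gamma(f)=\{\gamma\in\mathbb{R}^{|\Omega|}:\exists$ permutation $\pi$ with $\gamma_{\pi_i}=f(\mathcal{S}^\pi_i)-f(\mathcal{S}^\pi_{i-1})$ for all $i\}$. $D[f]=\max\{f(\mathcal{A}\cup\mathcal{B}\cup\{s\})-f(\mathcal{A}\cup\mathcal{B})-f(\mathcal{A}\cup\{s\})+f(\mathcal{A}):\mathcal{A},\mathcal{B}\subseteq\Omega,s\in\Omega,|\mathcal{A}|\le|\Omega|-1\}$. *)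

theory Defs
  imports Complex_Main
begin

text \<open>A permutation pi of Omega is a duplicate-free list whose elements are exactly Omega;
  S^pi_k = set (take k pi). Gamma(f) is the set of marginal-gain vectors along such orderings
  (gamma (pi!i) uses 0-based indices: S_{i+1} minus S_i).\<close>
definition Gamma :: "'a set \<Rightarrow> ('a set \<Rightarrow> real) \<Rightarrow> ('a \<Rightarrow> real) set" where
  "Gamma \<Omega> f = {\<gamma>. \<exists>\<pi>. distinct \<pi> \<and> set \<pi> = \<Omega> \<and>
      (\<forall>i<length \<pi>. \<gamma> (\<pi> ! i) = f (set (take (Suc i) \<pi>)) - f (set (take i \<pi>)))}"

definition Dcurv :: "'a set \<Rightarrow> ('a set \<Rightarrow> real) \<Rightarrow> real" where
  "Dcurv \<Omega> f = Max {f (A \<union> B \<union> {s}) - f (A \<union> B) - f (A \<union> {s}) + f A | A B s.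
      A \<subseteq> \<Omega> \<and> B \<subseteq> \<Omega> \<and> s \<in> \<Omega> \<and> card A \<le> card \<Omega> - 1}"

end

theory Submission
  imports Defs
begin

lemma D_ge:
  assumes "finite \<Omega>" "A \<subseteq> \<Omega>" "B \<subseteq> \<Omega>" "s \<in> \<Omega>" "card A \<le> card \<Omega> - 1"
  shows "f (A \<union> B \<union> {s}) - f (A \<union> B) - f (A \<union> {s}) + f A \<le> Dcurv \<Omega> f"
proof -
  let ?M = "{f (A \<union> B \<union> {s}) - f (A \<union> B) - f (A \<union> {s}) + f A | A B s.
      A \<subseteq> \<Omega> \<and> B \<subseteq> \<Omega> \<and> s \<in> \<Omega> \<and> card A \<le> card \<Omega> - 1}"
  have "?M \<subseteq> (\<lambda>(A,B,s). f (A \<union> B \<union> {s}) - f (A \<union> B) - f (A \<union> {s}) + f A) ` (Pow \<Omega> \<times> Pow \<Omega> \<times> \<Omega>)"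
  proof
    fix x assume "x \<in> ?M"
    then obtain A B s where "x = f (A \<union> B \<union> {s}) - f (A \<union> B) - f (A \<union> {s}) + f A"
      "A \<subseteq> \<Omega>" "B \<subseteq> \<Omega>" "s \<in> \<Omega>" by blast
    then show "x \<in> (\<lambda>(A,B,s). f (A \<union> B \<union> {s}) - f (A \<union> B) - f (A \<union> {s}) + f A) ` (Pow \<Omega> \<times> Pow \<Omega> \<times> \<Omega>)"
      by (intro image_eqI[where x="(A,B,s)"]) auto
  qed
  moreover have "finite (Pow \<Omega> \<times> Pow \<Omega> \<times> \<Omega>)" using assms(1) by simp
  ultimately have "finite ?M" by (meson finite_imageI finite_subset)
  moreover have "f (A \<union> B \<union> {s}) - f (A \<union> B) - f (A \<union> {s}) + f A \<in> ?M" using assms by blast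
  ultimately show ?thesis unfolding Dcurv_def by (rule Max_ge)
qed

theorem mainTheorem18:
  fixes \<Omega> :: "'a set" and f :: "'a set \<Rightarrow> real" and \<gamma> :: "'a \<Rightarrow> real"
  assumes "finite \<Omega>"
    and "\<And>A B. A \<subseteq> B \<Longrightarrow> B \<subseteq> \<Omega> \<Longrightarrow> f A \<le> f B"
    and "f {} = 0"
    and "\<gamma> \<in> Gamma \<Omega> f"
    and "S \<subseteq> \<Omega>"
  shows "f S \<ge> - real (card S) * Dcurv \<Omega> f + (\<Sum>s\<in>S. \<gamma> s)"
proof -
  obtain \<pi> where dist: "distinct \<pi>" and set\<pi>: "set \<pi> = \<Omega>" and
    g: "\<And>i. i<length \<pi> \<Longrightarrow> \<gamma> (\<pi> ! i) = f (set (take (Suc i) \<pi>)) - f (set (take i \<pi>))"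
    using assms(4) unfolding Gamma_def by blast
  let ?D = "Dcurv \<Omega> f"
  have cardO: "card \<Omega> = length \<pi>" using dist set\<pi> distinct_card by blast
  have main: "k \<le> length \<pi> \<Longrightarrow> f (S \<inter> set (take k \<pi>)) \<ge>
      - real (card (S \<inter> set (take k \<pi>))) * ?D + (\<Sum>s\<in>S \<inter> set (take k \<pi>). \<gamma> s)" for k
  proof (induction k)
    case 0
    then show ?case using assms(3) by simp
  next
    case (Suc k)
    let ?P = "set (take k \<pi>)"
    let ?T = "S \<inter> ?P"
    let ?s = "\<pi> ! k"
    have kl: "k < length \<pi>" using Suc.prems by simp
    have tk: "set (take (Suc k) \<pi>) = ?P \<union> {?s}" using kl by (simp add: take_Suc_conv_app_nth)
    have sn: "?s \<notin> ?P" using dist kl by (simp add: in_set_conv_nth nth_eq_iff_index_eq)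
    have IH: "f ?T \<ge> - real (card ?T) * ?D + (\<Sum>s\<in>?T. \<gamma> s)" using Suc by simp
    show ?case
    proof (cases "?s \<in> S")
      case False
      then have "S \<inter> set (take (Suc k) \<pi>) = ?T" using tk by auto
      then show ?thesis using IH by simp
    next
      case True
      have eq: "S \<inter> set (take (Suc k) \<pi>) = insert ?s ?T" using tk True by auto
      have fin: "finite ?T" by simp
      have snT: "?s \<notin> ?T" using sn by simp
      have sO: "?s \<in> \<Omega>" using kl set\<pi> by auto
      have PO: "?P \<subseteq> \<Omega>" using set\<pi> by (meson set_take_subset)
      have TO: "?T \<subseteq> \<Omega>" using PO by auto
      have "card ?T \<le> card ?P" by (rule card_mono) auto
      also have "card ?P \<le> k" by (rule card_length[THEN order_trans]) simp
      finally have cT: "card ?T \<le> card \<Omega> - 1" using kl cardO by linarith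
      have TP: "?T \<union> ?P = ?P" by auto
      have Dle: "f (?T \<union> ?P \<union> {?s}) - f (?T \<union> ?P) - f (?T \<union> {?s}) + f ?T \<le> ?D"
        by (rule D_ge[OF assms(1) TO PO sO cT])
      have gs: "\<gamma> ?s = f (?P \<union> {?s}) - f ?P" using g[OF kl] tk by simp
      have "f (insert ?s ?T) \<ge> f ?T + \<gamma> ?s - ?D"
        using Dle gs TP by simp
      moreover have "card (insert ?s ?T) = Suc (card ?T)" using fin snT by simp
      moreover have "(\<Sum>s\<in>insert ?s ?T. \<gamma> s) = \<gamma> ?s + (\<Sum>s\<in>?T. \<gamma> s)" using fin snT by simp
      ultimately show ?thesis unfolding eq using IH by (simp add: algebra_simps)
    qed
  qed
  have "S \<inter> set (take (length \<pi>) \<pi>) = S" using assms(5) set\<pi> by auto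
  with main[of "length \<pi>"] show ?thesis by simp
qed

end
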